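(* Let $\widetilde M_0(\varepsilon),\widetilde M_1(\varepsilon)$ be two families of diagonalizable linear operators on $\mathbb C^2$ depending on a parameter $\varepsilon>0$. Let $\widetilde\Lambda_i=\operatorname{diag}(\lambda_{i1},\lambda_{i2})$ be the matrix of $\widetilde M_i$ in its eigenbasis, $i=0,1$. Let $C(\varepsilon)$ be the transition matrix between the eigenbases, so that in the eigenbasis of $\widetilde M_0$ the matrix of $\widetilde M_1$ is $C(\varepsilon)\widetilde\Lambda_1C^{-1}(\varepsilon)$. Suppose the eigenbases converge to some bases as $\varepsilon\to0$, and that $C(\varepsilon)$ tends to a unipotent lower-triangular matrix $C_0$. Suppose $$\nu_0=\frac{\lambda_{02}}{\lambda_{01}}\to0,\qquad \nu_1=\frac{\lambda_{11}}{\lambda_{12}}\to0\quad(\varepsilon\to0),$$ and suppose the upper-triangular (i.e. $(1,2)$) entry $u(\varepsilon)$ of $C(\varepsilon)$ satisfies $u(\varepsilon)=o(\nu_0\nu_1)$ as $\varepsilon\to0$. Then the matrix of $\widetilde M_1^{-1}\widetilde M_0\widetilde M_1\widetilde M_0^{-1}$ in the eigenbasis of $\widetilde M_0$ converges to $C_0$ as $\varepsilon\to0$. *)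

theory Defs
  imports "HOL-Analysis.Analysis" "HOL-Library.Landau_Symbols"
begin

text \<open>2x2 complex matrices are \<open>complex^2^2\<close>; the index type 2 has the two
  elements 1 and 2, so \<open>A $ 1 $ 2\<close> is the (1,2) entry (row 1, column 2).\<close>

definition diag2 :: "complex \<Rightarrow> complex \<Rightarrow> complex^2^2" where
  "diag2 a b = (\<chi> i j. if i = j then (if i = 1 then a else b) else 0)"

definition unipotent_lower :: "complex^2^2 \<Rightarrow> bool" where
  "unipotent_lower A \<longleftrightarrow> A $ 1 $ 1 = 1 \<and> A $ 2 $ 2 = 1 \<and> A $ 1 $ 2 = 0"

end

theory Submission imports Defs begin

definition mat2 :: "complex \<Rightarrow> complex \<Rightarrow> complex \<Rightarrow> complex \<Rightarrow> complex^2^2" where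
  "mat2 a b c d = (\<chi> i j. if i = 1 then (if j = 1 then a else b) else (if j = 1 then c else d))"

lemma mat2_nth: "mat2 a b c d $ 1 $ 1 = a" "mat2 a b c d $ 1 $ 2 = b"
  "mat2 a b c d $ 2 $ 1 = c" "mat2 a b c d $ 2 $ 2 = d"
  by (simp_all add: mat2_def)

lemma mat2_eta: "A = mat2 (A$1$1) (A$1$2) (A$2$1) (A$2$2)"
  by (simp add: vec_eq_iff forall_2 mat2_def)

lemma mat2_mult: "mat2 a b c d ** mat2 e f g h = mat2 (a*e+b*g) (a*f+b*h) (c*e+d*g) (c*f+d*h)"
  by (simp add: vec_eq_iff forall_2 mat2_def matrix_matrix_mult_def sum_2)

lemma diag2_mat2: "diag2 a b = mat2 a 0 0 b"
  by (simp add: vec_eq_iff forall_2 mat2_def diag2_def)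

lemma mat1_mat2: "(mat 1 :: complex^2^2) = mat2 1 0 0 1"
  by (simp add: vec_eq_iff forall_2 mat2_def mat_def)

lemma mat2_eq: "mat2 a b c d = mat2 a' b' c' d' \<longleftrightarrow> a = a' \<and> b = b' \<and> c = c' \<and> d = d'"
  by (metis mat2_nth)

lemma inv_unique:
  fixes A B :: "'a::field^'n^'n"
  assumes "A ** B = mat 1" shows "matrix_inv A = B"
proof -
  have BA: "B ** A = mat 1" using assms matrix_left_right_inverse by blast
  have "invertible A" using assms BA invertible_def by blast
  then have "matrix_inv A ** A = mat 1"
    unfolding invertible_def matrix_inv_def by (rule someI2_ex) auto
  then have "matrix_inv A ** (A ** B) = B" by (metis matrix_mul_assoc matrix_mul_lid)
  then show ?thesis using assms by (simp add: matrix_mul_rid)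
qed

lemma inv_props:
  fixes A :: "'a::field^'n^'n"
  assumes "invertible A" shows "A ** matrix_inv A = mat 1" "matrix_inv A ** A = mat 1"
  using assms unfolding invertible_def matrix_inv_def by (rule someI2_ex; auto)+

lemma key:
  fixes p q r w n0 n1 a1 a2 b1 b2 :: complex
  assumes nz: "a1 \<noteq> 0" "a2 \<noteq> 0" "b1 \<noteq> 0" "b2 \<noteq> 0"
    and n0: "n0 = a2/a1" and n1: "n1 = b1/b2"
    and d: "p* r - w*n0*n1*q \<noteq> 0"
    and Ci: "mat2 p (w*n0*n1) q r ** Ci = mat 1"
  shows "mat2 p (w*n0*n1) q r ** diag2 (1/b1) (1/b2) ** Ci ** diag2 a1 a2 ** mat2 p (w*n0*n1) q r
     ** diag2 b1 b2 ** Ci ** diag2 (1/a1) (1/a2)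
   = mat2 p (w*n0*n1) q r
     ** mat2 ((r*p - w*n1*n0^2*q)/(p* r - w*n0*n1*q)) (r*w*(1-n0)/(p* r - w*n0*n1*q))
             (p*q*(n0-1)*n1/(p* r - w*n0*n1*q)) ((p* r - q*w*n1)/(p* r - w*n0*n1*q))
     ** mat2 (r/(p* r - w*n0*n1*q)) (-w*n1/(p* r - w*n0*n1*q)) (-q*n0/(p* r - w*n0*n1*q)) (p/(p* r - w*n0*n1*q))"
proof -
  define \<delta> where "\<delta> = p* r - w*n0*n1*q"
  have "\<delta> \<noteq> 0" using d \<delta>_def by simp
  have Cieq: "Ci = mat2 (r/\<delta>) (-(w*n0*n1)/\<delta>) (-q/\<delta>) (p/\<delta>)"
  proof -
    have "mat2 p (w*n0*n1) q r ** mat2 (r/\<delta>) (-(w*n0*n1)/\<delta>) (-q/\<delta>) (p/\<delta>) = mat 1"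
      using \<open>\<delta> \<noteq> 0\<close> unfolding mat2_mult mat1_mat2 mat2_eq
      by (simp add: times_divide_eq_right add_divide_distrib[symmetric] diff_divide_distrib[symmetric] minus_divide_left[symmetric] \<delta>_def algebra_simps)
    then show ?thesis using Ci inv_unique by metis
  qed
  have a2: "a2 = n0*a1" and b1: "b1 = n1*b2" using n0 n1 nz by auto
  have "n0 \<noteq> 0" "n1 \<noteq> 0" using n0 n1 nz by auto
  then show ?thesis
    unfolding \<delta>_def[symmetric] Cieq a2 b1 diag2_mat2 mat2_mult mat2_eq using \<open>\<delta> \<noteq> 0\<close> nz
    by (simp add: field_simps power2_eq_square)
qed
lemma cancel_l: fixes A B :: "'a::semiring_1^'n^'n" shows "A ** B = mat 1 \<Longrightarrow> A ** (B ** X) = X"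
  by (metis matrix_mul_assoc matrix_mul_lid)

lemma diag2_inv: "a \<noteq> 0 \<Longrightarrow> b \<noteq> 0 \<Longrightarrow> diag2 a b ** diag2 (1/a) (1/b) = mat 1"
  by (simp add: diag2_mat2 mat2_mult mat1_mat2)

lemma tendsto_mmult:
  fixes A B :: "'b \<Rightarrow> 'a::real_normed_field^'n^'n"
  assumes "(A \<longlongrightarrow> A0) F" "(B \<longlongrightarrow> B0) F"
  shows "((\<lambda>x. A x ** B x) \<longlongrightarrow> A0 ** B0) F"
  using assms unfolding matrix_matrix_mult_def
  by (auto intro!: tendsto_intros)

lemma tendsto_mat2:
  assumes "(a \<longlongrightarrow> a0) F" "(b \<longlongrightarrow> b0) F" "(c \<longlongrightarrow> c0) F" "(d \<longlongrightarrow> d0) F"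
  shows "((\<lambda>x. mat2 (a x) (b x) (c x) (d x)) \<longlongrightarrow> mat2 a0 b0 c0 d0) F"
proof (rule vec_tendstoI)
  fix i :: 2
  show "((\<lambda>x. mat2 (a x) (b x) (c x) (d x) $ i) \<longlongrightarrow> mat2 a0 b0 c0 d0 $ i) F"
  proof (rule vec_tendstoI)
    fix j :: 2
    show "((\<lambda>x. mat2 (a x) (b x) (c x) (d x) $ i $ j) \<longlongrightarrow> mat2 a0 b0 c0 d0 $ i $ j) F"
      using assms using exhaust_2[of i] exhaust_2[of j] by (auto simp: mat2_nth)
  qed
qed

theorem lemma3p5:
  fixes M0 M1 P0 P1 C :: "real \<Rightarrow> complex^2^2"
    and l01 l02 l11 l12 :: "real \<Rightarrow> complex"
    and Q0 Q1 C0 :: "complex^2^2"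
  assumes nz: "\<And>\<epsilon>. \<epsilon> > 0 \<Longrightarrow> l01 \<epsilon> \<noteq> 0 \<and> l02 \<epsilon> \<noteq> 0 \<and> l11 \<epsilon> \<noteq> 0 \<and> l12 \<epsilon> \<noteq> 0"
    and P0_inv: "\<And>\<epsilon>. \<epsilon> > 0 \<Longrightarrow> invertible (P0 \<epsilon>)"
    and P1_inv: "\<And>\<epsilon>. \<epsilon> > 0 \<Longrightarrow> invertible (P1 \<epsilon>)"
    and M0_eig: "\<And>\<epsilon>. \<epsilon> > 0 \<Longrightarrow> M0 \<epsilon> = P0 \<epsilon> ** diag2 (l01 \<epsilon>) (l02 \<epsilon>) ** matrix_inv (P0 \<epsilon>)"
    and M1_eig: "\<And>\<epsilon>. \<epsilon> > 0 \<Longrightarrow> M1 \<epsilon> = P1 \<epsilon> ** diag2 (l11 \<epsilon>) (l12 \<epsilon>) ** matrix_inv (P1 \<epsilon>)"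
    and C_def: "\<And>\<epsilon>. \<epsilon> > 0 \<Longrightarrow> C \<epsilon> = matrix_inv (P0 \<epsilon>) ** P1 \<epsilon>"
    and P0_lim: "(P0 \<longlongrightarrow> Q0) (at_right 0)" and Q0_inv: "invertible Q0"
    and P1_lim: "(P1 \<longlongrightarrow> Q1) (at_right 0)" and Q1_inv: "invertible Q1"
    and C_lim: "(C \<longlongrightarrow> C0) (at_right 0)"
    and C0_unip: "unipotent_lower C0"
    and nu0: "((\<lambda>\<epsilon>. l02 \<epsilon> / l01 \<epsilon>) \<longlongrightarrow> 0) (at_right 0)"
    and nu1: "((\<lambda>\<epsilon>. l11 \<epsilon> / l12 \<epsilon>) \<longlongrightarrow> 0) (at_right 0)"
    and u_small: "(\<lambda>\<epsilon>. C \<epsilon> $ 1 $ 2) \<in> o[at_right 0](\<lambda>\<epsilon>. (l02 \<epsilon> / l01 \<epsilon>) * (l11 \<epsilon> / l12 \<epsilon>))"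
  shows "((\<lambda>\<epsilon>. matrix_inv (P0 \<epsilon>) ** (matrix_inv (M1 \<epsilon>) ** M0 \<epsilon> ** M1 \<epsilon> ** matrix_inv (M0 \<epsilon>)) ** P0 \<epsilon>)
           \<longlongrightarrow> C0) (at_right 0)"
proof -
  define p where "p e = C e $ 1 $ 1" for e
  define q where "q e = C e $ 2 $ 1" for e
  define r where "r e = C e $ 2 $ 2" for e
  define u where "u e = C e $ 1 $ 2" for e
  define n0 where "n0 e = l02 e / l01 e" for e
  define n1 where "n1 e = l11 e / l12 e" for e
  define w where "w e = u e / (n0 e * n1 e)" for e
  define d where "d e = p e * r e - w e * n0 e * n1 e * q e" for e
  define Y where "Y e = mat2 ((r e * p e - w e*n1 e*(n0 e)^2*q e)/d e) (r e*w e*(1-n0 e)/d e)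
             (p e*q e*(n0 e-1)*n1 e/d e) ((p e * r e - q e*w e*n1 e)/d e)" for e
  define K where "K e = mat2 (r e/d e) (-w e*n1 e/d e) (-q e*n0 e/d e) (p e/d e)" for e
  let ?F = "at_right (0::real)"
  let ?T = "\<lambda>\<epsilon>. matrix_inv (P0 \<epsilon>) ** (matrix_inv (M1 \<epsilon>) ** M0 \<epsilon> ** M1 \<epsilon> ** matrix_inv (M0 \<epsilon>)) ** P0 \<epsilon>"
  have c0: "C0 $ 1 $ 1 = 1" "C0 $ 2 $ 2 = 1" using C0_unip unfolding unipotent_lower_def by auto
  have lp: "(p \<longlongrightarrow> 1) ?F" unfolding p_def using tendsto_vec_nth[OF tendsto_vec_nth[OF C_lim], of 1 1] tendsto_vec_nth[OF tendsto_vec_nth[OF C_lim], of 2 2] c0 by auto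
  have lr: "(r \<longlongrightarrow> 1) ?F" unfolding r_def using tendsto_vec_nth[OF tendsto_vec_nth[OF C_lim], of 1 1] tendsto_vec_nth[OF tendsto_vec_nth[OF C_lim], of 2 2] c0 by auto
  have lq: "(q \<longlongrightarrow> C0 $ 2 $ 1) ?F" unfolding q_def using tendsto_vec_nth[OF tendsto_vec_nth[OF C_lim], of 2 1] by auto
  have lw: "(w \<longlongrightarrow> 0) ?F" unfolding w_def u_def n0_def n1_def using smalloD_tendsto[OF u_small] .
  have ln0: "(n0 \<longlongrightarrow> 0) ?F" unfolding n0_def using nu0 .
  have ln1: "(n1 \<longlongrightarrow> 0) ?F" unfolding n1_def using nu1 .
  have ld: "(d \<longlongrightarrow> 1) ?F" unfolding d_def[abs_def]
    using lp lr lq lw ln0 ln1 by (auto intro!: tendsto_eq_intros)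
  have lY: "(Y \<longlongrightarrow> mat2 1 0 0 1) ?F" unfolding Y_def
    using lp lr lq lw ln0 ln1 ld by (auto intro!: tendsto_eq_intros tendsto_mat2)
  have lK: "(K \<longlongrightarrow> mat2 1 0 0 1) ?F" unfolding K_def
    using lp lr lq lw ln0 ln1 ld by (auto intro!: tendsto_eq_intros tendsto_mat2)
  have lim: "((\<lambda>e. C e ** Y e ** K e) \<longlongrightarrow> C0) ?F"
    using tendsto_mmult[OF tendsto_mmult[OF C_lim lY] lK] by (simp add: mat1_mat2[symmetric] matrix_mul_rid)
  have ev: "eventually (\<lambda>e. e > 0 \<and> d e \<noteq> 0) ?F"
  proof -
    have "eventually (\<lambda>e. d e \<noteq> 0) ?F" using ld by (rule tendsto_imp_eventually_ne) simp
    moreover have "eventually (\<lambda>e. e > (0::real)) ?F" by (simp add: eventually_at_filter)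
    ultimately show ?thesis by eventually_elim auto
  qed
  have "eventually (\<lambda>e. C e ** Y e ** K e = ?T e) ?F"
    using ev
  proof eventually_elim
    case (elim e)
    then have e: "e > 0" and de: "d e \<noteq> 0" by auto
    note nze = nz[OF e]
    define A where "A = P0 e"
    define B where "B = P1 e"
    have A1: "A ** matrix_inv A = mat 1" "matrix_inv A ** A = mat 1" using inv_props P0_inv[OF e] A_def by auto
    have B1: "B ** matrix_inv B = mat 1" "matrix_inv B ** B = mat 1" using inv_props P1_inv[OF e] B_def by auto
    have D0: "diag2 (l01 e) (l02 e) ** diag2 (1/l01 e) (1/l02 e) = mat 1" using nze diag2_inv by auto
    have D1: "diag2 (l11 e) (l12 e) ** diag2 (1/l11 e) (1/l12 e) = mat 1" using nze diag2_inv by auto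
    have D1': "diag2 (1/l11 e) (1/l12 e) ** diag2 (l11 e) (l12 e) = mat 1" using nze diag2_inv[of "1/l11 e" "1/l12 e"] by auto
    note canc = cancel_l[OF A1(1)] cancel_l[OF A1(2)] cancel_l[OF B1(1)] cancel_l[OF B1(2)]
       cancel_l[OF D0] cancel_l[OF D1] cancel_l[OF D1']
    have iM0: "matrix_inv (M0 e) = A ** diag2 (1/l01 e) (1/l02 e) ** matrix_inv A"
      by (rule inv_unique) (simp add: M0_eig[OF e] A_def[symmetric] matrix_mul_assoc[symmetric] canc A1 D0)
    have iM1: "matrix_inv (M1 e) = B ** diag2 (1/l11 e) (1/l12 e) ** matrix_inv B"
      by (rule inv_unique) (simp add: M1_eig[OF e] B_def[symmetric] matrix_mul_assoc[symmetric] canc B1 D1)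
    have T: "?T e = C e ** diag2 (1/l11 e) (1/l12 e) ** (matrix_inv B ** A) ** diag2 (l01 e) (l02 e) ** C e
       ** diag2 (l11 e) (l12 e) ** (matrix_inv B ** A) ** diag2 (1/l01 e) (1/l02 e)"
      unfolding iM0 iM1 unfolding M0_eig[OF e] M1_eig[OF e] C_def[OF e] A_def[symmetric] B_def[symmetric]
      by (simp add: matrix_mul_assoc[symmetric] canc A1 matrix_mul_rid)
    have CCi: "C e ** (matrix_inv B ** A) = mat 1"
      unfolding C_def[OF e] A_def[symmetric] B_def[symmetric] by (simp add: matrix_mul_assoc[symmetric] canc A1)
    have n0e: "n0 e \<noteq> 0" and n1e: "n1 e \<noteq> 0" using nze n0_def n1_def by auto
    have Ce: "C e = mat2 (p e) (w e * n0 e * n1 e) (q e) (r e)"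
    proof -
      have "w e * n0 e * n1 e = u e" using n0e n1e unfolding w_def by simp
      then show ?thesis unfolding p_def q_def r_def u_def by (simp only: mat2_eta[symmetric])
    qed
    show ?case unfolding T Ce Y_def K_def d_def
      by (rule key[symmetric]) (use nze de CCi Ce in \<open>auto simp: n0_def n1_def d_def\<close>)
  qed
  then show ?thesis by (rule Lim_transform_eventually[OF lim])
qed

end
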